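(* An infinite binary overlap-free word $\mathbf{x}$ is $2$-automatic if and only if its code $(i_j)_{j\ge1}$ is ultimately periodic.
   Context: $\Sigma=\{0,1\}$. An overlap is a word $axaxa$ with $a\in\Sigma$, $x\in\Sigma^*$; a word is overlap-free if it has no overlap as a factor. $\mathcal{O}$ is the set of right-infinite binary overlap-free words, $\mu$ is the morphism $0\mapsto01$, $1\mapsto10$. Let $p_0=\epsilon$, $p_1=0$, $p_2=00$, $p_3=1$, $p_4=11$. The code of $\mathbf{x}\in\mathcal{O}$ is the unique sequence $(i_j)_{j\ge1}$ over $\{0,1,2,3,4\}$ for which there exist $\mathbf{y}_0=\mathbf{x},\mathbf{y}_1,\mathbf{y}_2,\ldots\in\mathcal{O}$ with $\mathbf{y}_{j-1}=p_{i_j}\mu(\mathbf{y}_j)$ for all $j\ge1$ (existence and uniqueness follow from the Restivo–Salemi factorization: each $\mathbf{x}\in\mathcal{O}$ is uniquely $p\mu(\mathbf{y})$ with $p\in\{p_0,\dots,p_4\}$, $\mathbf{y}\in\mathcal{O}$). An infinite word $(a_n)_{n\ge0}$ is $2$-automatic if there is a deterministic finite automaton with output which, on input the base-2 representation of $n$, outputs $a_n$ (equivalently, its $2$-kernel $\{(a_{2^e n+i})_{n\ge0}: e\ge0,0\le i<2^e\}$ is finite). *)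

theory Defs
  imports Main
begin

text \<open>Binary infinite words are functions nat => bool; the letter 0 is False, 1 is True.\<close>
type_synonym iword = "nat \<Rightarrow> bool"

text \<open>w contains an overlap axaxa (a a letter, x a finite word) as a factor starting at i,
  with p = |ax| >= 1: the factor w(i..i+2p) has period p.\<close>
definition has_overlap :: "iword \<Rightarrow> bool" where
  "has_overlap w \<longleftrightarrow> (\<exists>i p. p \<ge> 1 \<and> (\<forall>k\<le>p. w (i + k) = w (i + k + p)))"

definition overlap_free :: "iword \<Rightarrow> bool" where
  "overlap_free w \<longleftrightarrow> \<not> has_overlap w"

text \<open>The Thue--Morse morphism mu: 0 -> 01, 1 -> 10, applied to an infinite word.\<close>
definition mu :: "iword \<Rightarrow> iword" where
  "mu y n = (if even n then y (n div 2) else \<not> y (n div 2))"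

definition prepend :: "bool list \<Rightarrow> iword \<Rightarrow> iword" where
  "prepend u y n = (if n < length u then u ! n else y (n - length u))"

fun pref :: "nat \<Rightarrow> bool list" where
  "pref 0 = []"
| "pref (Suc 0) = [False]"
| "pref (Suc (Suc 0)) = [False, False]"
| "pref (Suc (Suc (Suc 0))) = [True]"
| "pref (Suc (Suc (Suc (Suc 0)))) = [True, True]"
| "pref _ = []"

text \<open>c is a code of x: c j (j >= 0) plays the role of i_(j+1), and y j the role of y_j.\<close>
definition is_code :: "iword \<Rightarrow> (nat \<Rightarrow> nat) \<Rightarrow> bool" where
  "is_code x c \<longleftrightarrow> (\<exists>y :: nat \<Rightarrow> iword. y 0 = x \<and>
      (\<forall>j. overlap_free (y j) \<and> c j \<in> {0..4} \<and> y j = prepend (pref (c j)) (mu (y (Suc j)))))"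

definition code :: "iword \<Rightarrow> (nat \<Rightarrow> nat)" where
  "code x = (THE c. is_code x c)"

definition ultimately_periodic :: "(nat \<Rightarrow> 'a) \<Rightarrow> bool" where
  "ultimately_periodic c \<longleftrightarrow> (\<exists>N p. p > 0 \<and> (\<forall>n\<ge>N. c (n + p) = c n))"

definition kernel2 :: "(nat \<Rightarrow> 'a) \<Rightarrow> (nat \<Rightarrow> 'a) set" where
  "kernel2 a = {(\<lambda>n. a (2 ^ e * n + i)) | e i. i < 2 ^ e}"

definition automatic2 :: "(nat \<Rightarrow> 'a) \<Rightarrow> bool" where
  "automatic2 a \<longleftrightarrow> finite (kernel2 a)"

end

theory Submission
  imports Defs
begin

lemma prepend_lt: "n < length u \<Longrightarrow> prepend u y n = u ! n"
  by (simp add: prepend_def)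
lemma prepend_ge: "length u \<le> n \<Longrightarrow> prepend u y n = y (n - length u)"
  by (simp add: prepend_def)
lemma prepend_shift: "prepend u y (length u + n) = y n"
  by (simp add: prepend_def)
lemma mu_even: "mu y (2*n) = y n"
  by (simp add: mu_def)
lemma mu_odd: "mu y (Suc (2*n)) = (\<not> y n)"
  by (simp add: mu_def)

lemma pref_len: "length (pref k) \<le> 2"
  by (cases k rule: pref.cases) auto

lemma pref_vals: "pref 0 = [] \<and> pref 1 = [False] \<and> pref 2 = [False,False] \<and> pref 3 = [True] \<and> pref 4 = [True,True]"
  by (simp add: numeral_eq_Suc)

lemma ov_intro: "p \<ge> 1 \<Longrightarrow> (\<forall>k\<le>p. w (i + k) = w (i + k + p)) \<Longrightarrow> \<not> overlap_free w"
  unfolding overlap_free_def has_overlap_def by blast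

lemma ov1: "w i = w (i+1) \<Longrightarrow> w (i+1) = w (i+2) \<Longrightarrow> \<not> overlap_free w"
proof -
  assume a: "w i = w (i+1)" "w (i+1) = w (i+2)"
  have "\<forall>k\<le>1. w (i + k) = w (i + k + 1)"
  proof (intro allI impI)
    fix k :: nat assume "k \<le> 1" then have "k = 0 \<or> k = 1" by arith
    then show "w (i + k) = w (i + k + 1)" using a by (auto simp: eval_nat_numeral)
  qed
  then show ?thesis by (intro ov_intro[of 1]) auto
qed

lemma ov2: "w i = w (i+2) \<Longrightarrow> w (i+1) = w (i+3) \<Longrightarrow> w (i+2) = w (i+4) \<Longrightarrow> \<not> overlap_free w"
proof -
  assume a: "w i = w (i+2)" "w (i+1) = w (i+3)" "w (i+2) = w (i+4)"
  have "\<forall>k\<le>2. w (i + k) = w (i + k + 2)"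
  proof (intro allI impI)
    fix k :: nat assume "k \<le> 2" then have "k = 0 \<or> k = 1 \<or> k = 2" by arith
    then show "w (i + k) = w (i + k + 2)" using a by (auto simp: eval_nat_numeral)
  qed
  then show ?thesis by (intro ov_intro[of 2]) auto
qed

lemma ov3: "w i = w (i+3) \<Longrightarrow> w (i+1) = w (i+4) \<Longrightarrow> w (i+2) = w (i+5) \<Longrightarrow> w (i+3) = w (i+6) \<Longrightarrow> \<not> overlap_free w"
proof -
  assume a: "w i = w (i+3)" "w (i+1) = w (i+4)" "w (i+2) = w (i+5)" "w (i+3) = w (i+6)"
  have "\<forall>k\<le>3. w (i + k) = w (i + k + 3)"
  proof (intro allI impI)
    fix k :: nat assume "k \<le> 3" then have "k = 0 \<or> k = 1 \<or> k = 2 \<or> k = 3" by arith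
    then show "w (i + k) = w (i + k + 3)" using a by (auto simp: eval_nat_numeral)
  qed
  then show ?thesis by (intro ov_intro[of 3]) auto
qed

lemma key:
  assumes of: "overlap_free x"
  shows "1 \<le> i \<Longrightarrow> i < j \<Longrightarrow> x i = x (Suc i) \<Longrightarrow> x j = x (Suc j) \<Longrightarrow> even (j - i)"
proof (induction "j - i" arbitrary: i j rule: less_induct)
  case less
  show ?case
  proof (rule ccontr)
    assume od: "odd (j - i)"
    show False
    proof (cases "\<exists>k. i < k \<and> k < j \<and> x k = x (Suc k)")
      case True
      then obtain k where k: "i < k" "k < j" "x k = x (Suc k)" by blast
      have "odd (k - i) \<or> odd (j - k)" using od k by presburger
      then show False
      proof
        assume "odd (k - i)"
        moreover have "even (k - i)" using less.hyps[of k i] less.prems k by auto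
        ultimately show False by simp
      next
        assume "odd (j - k)"
        moreover have "even (j - k)" using less.hyps[of j k] less.prems k by auto
        ultimately show False by simp
      qed
    next
      case False
      then have alt: "\<And>m. i < m \<Longrightarrow> m < j \<Longrightarrow> x m \<noteq> x (Suc m)" by blast
      have "j = i + 1 \<or> j = i + 3 \<or> j \<ge> i + 5" using od less.prems by presburger
      moreover
      { assume "j = i + 1"
        then have False using ov1[of x i] of less.prems by simp }
      moreover
      { assume j3: "j = i + 3"
        obtain i' where i': "i = Suc i'" using less.prems by (cases i) auto
        have a1: "x (i+1) \<noteq> x (i+2)" using alt[of "i+1"] j3 by (simp add: eval_nat_numeral)
        have a2: "x (i+2) \<noteq> x (i+3)" using alt[of "i+2"] j3 by (simp add: eval_nat_numeral)
        have e1: "x i = x (i+1)" using less.prems by simp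
        have e2: "x (i+3) = x (i+4)" using less.prems j3 by (simp add: eval_nat_numeral)
        have False
        proof (cases "x i' = x i")
          case True
          then show False using ov1[of x i'] of e1 i' by simp
        next
          case c2: False
          show False
          proof (cases "x (i+5) = x (i+4)")
            case True
            then show False using ov1[of x "i+3"] of e2 by (simp add: eval_nat_numeral)
          next
            case False
            have "x i' = x (i'+3)" "x (i'+1) = x (i'+4)" "x (i'+2) = x (i'+5)" "x (i'+3) = x (i'+6)"
              using a1 a2 e1 e2 c2 False i' by (auto simp: eval_nat_numeral)
            then show False using ov3[of x i'] of by blast
          qed
        qed }
      moreover
      { assume j5: "j \<ge> i + 5"
        have "x (i+1) \<noteq> x (i+2)" "x (i+2) \<noteq> x (i+3)" "x (i+3) \<noteq> x (i+4)" "x (i+4) \<noteq> x (i+5)"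
          using alt[of "i+1"] alt[of "i+2"] alt[of "i+3"] alt[of "i+4"] j5 by (auto simp: eval_nat_numeral)
        then have "x (i+1) = x (i+1+2)" "x (i+1+1) = x (i+1+3)" "x (i+1+2) = x (i+1+4)"
          by (auto simp: eval_nat_numeral)
        then have False using ov2[of x "i+1"] of by blast }
      ultimately show False by blast
    qed
  qed
qed

lemma mu_adj: "x = prepend p (mu y) \<Longrightarrow> length p \<le> m \<Longrightarrow> even (m - length p) \<Longrightarrow> x m \<noteq> x (Suc m)"
proof -
  assume x: "x = prepend p (mu y)" and m: "length p \<le> m" "even (m - length p)"
  then obtain k where k: "m = length p + 2*k" by (metis evenE le_add_diff_inverse)
  have "x m = y k" using x k prepend_shift[of p "mu y" "2*k"] mu_even by simp
  moreover have "x (Suc m) = (\<not> y k)" using x k prepend_shift[of p "mu y" "Suc (2*k)"] mu_odd by simp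
  ultimately show ?thesis by simp
qed

lemma ov_mu: "overlap_free (prepend p (mu y)) \<Longrightarrow> overlap_free y"
proof -
  assume of: "overlap_free (prepend p (mu y))"
  show "overlap_free y"
  proof (rule ccontr)
    assume "\<not> overlap_free y"
    then obtain i q where q: "q \<ge> 1" "\<forall>k\<le>q. y (i + k) = y (i + k + q)"
      unfolding overlap_free_def has_overlap_def by blast
    have "\<forall>k\<le>2*q. prepend p (mu y) (length p + 2*i + k) = prepend p (mu y) (length p + 2*i + k + 2*q)"
    proof (intro allI impI)
      fix k assume "k \<le> 2*q"
      then have kk: "k div 2 \<le> q" by simp
      have e: "y (i + k div 2) = y (i + k div 2 + q)" using q(2) kk by blast
      have "prepend p (mu y) (length p + 2*i + k) = mu y (2*i + k)"
        using prepend_shift[of p "mu y" "2*i+k"] by (simp add: add.assoc)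
      moreover have "prepend p (mu y) (length p + 2*i + k + 2*q) = mu y (2*i + k + 2*q)"
        using prepend_shift[of p "mu y" "2*i+k+2*q"] by (simp add: add.assoc)
      moreover have "mu y (2*i + k) = mu y (2*i + k + 2*q)"
      proof -
        have d: "(2*i+k+2*q) div 2 = i + k div 2 + q" "(2*i+k) div 2 = i + k div 2" by simp_all
        have p: "even (2*i+k+2*q) = even (2*i+k)" by simp
        show ?thesis unfolding mu_def using e d p by (simp add: ac_simps)
      qed
      ultimately show "prepend p (mu y) (length p + 2*i + k) = prepend p (mu y) (length p + 2*i + k + 2*q)" by simp
    qed
    then show False using ov_intro[of "2*q"] of q(1) by auto
  qed
qed

lemma pairs_split: "(m::nat) = 2*(m div 2) \<or> m = Suc (2*(m div 2))" by presburger

lemma factor_ex: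
  assumes of: "overlap_free x"
  shows "\<exists>a w. a \<in> {0..4} \<and> overlap_free w \<and> x = prepend (pref a) (mu w)"
proof -
  have fact: "\<exists>a w. a \<in> {0..4} \<and> x = prepend (pref a) (mu w)"
  proof (cases "\<exists>i. 1 \<le> i \<and> odd i \<and> x i = x (Suc i)")
    case True
    then obtain i0 where i0: "1 \<le> i0" "odd i0" "x i0 = x (Suc i0)" by blast
    have ne: "x m \<noteq> x (Suc m)" if "m \<ge> 2" "even m" for m
    proof
      assume e: "x m = x (Suc m)"
      show False
      proof (cases "m < i0")
        case True
        then have "even (i0 - m)" using key[OF of, of m i0] that e i0 by auto
        then show False using True that i0 by auto
      next
        case False
        then have "m > i0" using that i0 by (metis le_neq_implies_less not_less)
        then have "even (m - i0)" using key[OF of, of i0 m] that e i0 by auto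
        then show False using \<open>m > i0\<close> that i0 by auto
      qed
    qed
    show ?thesis
    proof (cases "x 0 = x 1")
      case False
      define w where "w = (\<lambda>n. x (2*n))"
      have "x = prepend (pref 0) (mu w)"
      proof (rule ext)
        fix m
        have "prepend (pref 0) (mu w) m = mu w m" by (simp add: prepend_def)
        moreover have "x m = mu w m"
        proof (cases "m = 2*(m div 2)")
          case True
          then show ?thesis using mu_even[of w "m div 2"] by (simp add: w_def)
        next
          case F: False
          then have m: "m = Suc (2*(m div 2))" using pairs_split by blast
          have "x (2*(m div 2)) \<noteq> x (Suc (2*(m div 2)))"
          proof (cases "m div 2 = 0")
            case True then show ?thesis using False by simp
          next
            case False then show ?thesis using ne[of "2*(m div 2)"] by simp
          qed
          then show ?thesis using mu_odd[of w "m div 2"] m by (simp add: w_def)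
        qed
        ultimately show "x m = prepend (pref 0) (mu w) m" by simp
      qed
      then show ?thesis by (intro exI[of _ "0::nat"] exI[of _ w]) simp
    next
      case True
      define w where "w = (\<lambda>n. x (2*n+2))"
      define a where "a = (if x 0 then 4 else 2::nat)"
      have pa: "pref a = [x 0, x 0]" using pref_vals by (simp add: a_def)
      have "x = prepend (pref a) (mu w)"
      proof (rule ext)
        fix m
        show "x m = prepend (pref a) (mu w) m"
        proof (cases "m < 2")
          case True
          then have "m = 0 \<or> m = 1" by arith
          then show ?thesis using \<open>x 0 = x 1\<close> pa by (auto simp: prepend_def)
        next
          case False
          then have pm: "prepend (pref a) (mu w) m = mu w (m - 2)" using pa by (simp add: prepend_def numeral_2_eq_2)
          have "x m = mu w (m - 2)"
          proof (cases "even m")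
            case True
            define k where "k = (m - 2) div 2"
            have "m - 2 = 2*k" "m = 2*k+2" using True False unfolding k_def by presburger+
            then show ?thesis using mu_even[of w k] by (simp add: w_def)
          next
            case od: False
            define k where "k = (m - 2) div 2"
            have k: "m - 2 = Suc (2*k)" "m = 2*k+3" using od False unfolding k_def by presburger+
            have "x (2*k+2) \<noteq> x (Suc (2*k+2))" using ne[of "2*k+2"] by simp
            then show ?thesis using mu_odd[of w k] k by (simp add: w_def eval_nat_numeral)
          qed
          then show ?thesis using pm by simp
        qed
      qed
      moreover have "a \<in> {0..4}" by (simp add: a_def)
      ultimately show ?thesis by blast
    qed
  next
    case False
    then have ne: "x m \<noteq> x (Suc m)" if "m \<ge> 1" "odd m" for m using that by blast
    define w where "w = (\<lambda>n. x (2*n+1))"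
    define a where "a = (if x 0 then 3 else 1::nat)"
    have pa: "pref a = [x 0]" using pref_vals by (simp add: a_def)
    have "x = prepend (pref a) (mu w)"
    proof (rule ext)
      fix m
      show "x m = prepend (pref a) (mu w) m"
      proof (cases "m = 0")
        case True then show ?thesis using pa by (simp add: prepend_def)
      next
        case F: False
        then have pm: "prepend (pref a) (mu w) m = mu w (m - 1)" using pa by (simp add: prepend_def)
        have "x m = mu w (m - 1)"
        proof (cases "odd m")
          case True
          define k where "k = (m - 1) div 2"
          have "m - 1 = 2*k" "m = 2*k+1" using True unfolding k_def by presburger+
          then show ?thesis using mu_even[of w k] by (simp add: w_def)
        next
          case ev: False
          define k where "k = (m - 1) div 2"
          have k: "m - 1 = Suc (2*k)" "m = 2*k+2" using ev F unfolding k_def by presburger+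
          have "x (2*k+1) \<noteq> x (Suc (2*k+1))" using ne[of "2*k+1"] by simp
          then show ?thesis using mu_odd[of w k] k by (simp add: w_def eval_nat_numeral)
        qed
        then show ?thesis using pm by simp
      qed
    qed
    moreover have "a \<in> {0..4}" by (simp add: a_def)
    ultimately show ?thesis by blast
  qed
  then show ?thesis using ov_mu of by blast
qed

lemma pref_two: "length (pref b) = 2 \<Longrightarrow> \<exists>c. pref b = [c, c]"
  by (cases b rule: pref.cases) auto

lemma pref_inj: "a \<in> {0..4} \<Longrightarrow> b \<in> {0..4} \<Longrightarrow> pref a = pref b \<Longrightarrow> a = (b::nat)"
proof -
  assume "a \<in> {0..4}" "b \<in> {0..4}" "pref a = pref b"
  moreover have "a = 0 \<or> a = 1 \<or> a = 2 \<or> a = 3 \<or> a = 4" "b = 0 \<or> b = 1 \<or> b = 2 \<or> b = 3 \<or> b = 4"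
    using calculation by auto
  ultimately show ?thesis using pref_vals by auto
qed

lemma fac_unique:
  assumes of: "overlap_free x" and ab: "a \<in> {0..4}" "b \<in> {0..4}"
    and xa: "x = prepend (pref a) (mu z)" and xb: "x = prepend (pref b) (mu z')"
  shows "a = b \<and> z = z'"
proof -
  let ?la = "length (pref a)" and ?lb = "length (pref b)"
  have la: "?la \<le> 2" and lb: "?lb \<le> 2" using pref_len by auto
  have par: "even (?la + ?lb)"
  proof (rule ccontr)
    assume od: "odd (?la + ?lb)"
    have ne: "x m \<noteq> x (Suc m)" if "m \<ge> 2" for m
    proof -
      have "even (m - ?la) \<or> even (m - ?lb)" using od la lb that by presburger
      then show ?thesis
      proof
        assume "even (m - ?la)" then show ?thesis using mu_adj[OF xa] la that by simp
      next
        assume "even (m - ?lb)" then show ?thesis using mu_adj[OF xb] lb that by simp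
      qed
    qed
    have "x 2 = x (2+2)" "x (2+1) = x (2+3)" "x (2+2) = x (2+4)"
      using ne[of 2] ne[of 3] ne[of 4] ne[of 5] by (auto simp: eval_nat_numeral)
    then show False using ov2[of x 2] of by blast
  qed
  have leq: "?la = ?lb"
  proof (rule ccontr)
    assume "?la \<noteq> ?lb"
    then have "(?la = 0 \<and> ?lb = 2) \<or> (?la = 2 \<and> ?lb = 0)" using par la lb by presburger
    then show False
    proof
      assume h: "?la = 0 \<and> ?lb = 2"
      have "x 0 \<noteq> x (Suc 0)" using mu_adj[OF xa, of 0] h by simp
      moreover obtain c where "pref b = [c,c]" using pref_two h by blast
      ultimately show False using xb by (simp add: prepend_def)
    next
      assume h: "?la = 2 \<and> ?lb = 0"
      have "x 0 \<noteq> x (Suc 0)" using mu_adj[OF xb, of 0] h by simp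
      moreover obtain c where "pref a = [c,c]" using pref_two h by blast
      ultimately show False using xa by (simp add: prepend_def)
    qed
  qed
  have "pref a = pref b"
  proof (rule nth_equalityI)
    show "?la = ?lb" by (rule leq)
    fix n assume "n < ?la"
    then have 1: "x n = pref a ! n" by (simp add: xa prepend_lt)
    have 2: "x n = pref b ! n" using \<open>n < ?la\<close> leq by (simp add: xb prepend_lt)
    from 1 2 show "pref a ! n = pref b ! n" by simp
  qed
  then have "a = b" using pref_inj ab by blast
  moreover have "z = z'"
  proof (rule ext)
    fix n
    have "z n = x (?la + 2*n)" by (simp add: xa prepend_shift mu_even)
    moreover have "z' n = x (?lb + 2*n)" by (simp add: xb prepend_shift mu_even)
    ultimately show "z n = z' n" using leq by simp
  qed
  ultimately show ?thesis by simp
qed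

definition good :: "iword \<Rightarrow> (nat \<Rightarrow> nat) \<Rightarrow> (nat \<Rightarrow> iword) \<Rightarrow> bool" where
  "good z d Y \<longleftrightarrow> Y 0 = z \<and> (\<forall>j. overlap_free (Y j) \<and> d j \<in> {0..4} \<and> Y j = prepend (pref (d j)) (mu (Y (Suc j))))"

lemma is_code_good: "is_code x c \<longleftrightarrow> (\<exists>Y. good x c Y)"
  unfolding is_code_def good_def by blast

lemma good_unique:
  assumes g: "good z d Y" and g': "good z d' Y'"
  shows "d = d' \<and> Y = Y'"
proof -
  have st: "Y j = Y' j \<Longrightarrow> d j = d' j \<and> Y (Suc j) = Y' (Suc j)" for j
  proof -
    assume e: "Y j = Y' j"
    have 1: "overlap_free (Y j)" "d j \<in> {0..4}" and 3: "Y j = prepend (pref (d j)) (mu (Y (Suc j)))"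
      using g unfolding good_def by blast+
    have 2: "d' j \<in> {0..4}" and 4: "Y' j = prepend (pref (d' j)) (mu (Y' (Suc j)))"
      using g' unfolding good_def by blast+
    have 5: "Y j = prepend (pref (d' j)) (mu (Y' (Suc j)))" using e 4 by (rule trans)
    show ?thesis by (rule fac_unique[OF 1 2 3 5])
  qed
  have Y: "Y j = Y' j" for j
  proof (induction j)
    case 0 have "Y 0 = z" "Y' 0 = z" using g g' unfolding good_def by blast+
    then show ?case by simp
  next
    case (Suc j)
    then show ?case using st by blast
  qed
  have "d j = d' j" for j using st Y by blast
  then show ?thesis using Y by auto
qed

lemma code_ex:
  assumes of: "overlap_free x"
  shows "\<exists>c Y. good x c Y"
proof -
  define P where "P z aw \<longleftrightarrow> fst aw \<in> {0..4::nat} \<and> overlap_free (snd aw) \<and> z = prepend (pref (fst aw)) (mu (snd aw))" for z and aw :: "nat \<times> iword"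
  define F where "F z = (SOME aw. P z aw)" for z
  have FP: "P z (F z)" if oz: "overlap_free z" for z
  proof -
    obtain a w where "a \<in> {0..4}" "overlap_free w" "z = prepend (pref a) (mu w)" using factor_ex[OF oz] by blast
    then have "P z (a, w)" by (simp add: P_def)
    then show ?thesis unfolding F_def by (rule someI)
  qed
  define Y where "Y j = ((\<lambda>z. snd (F z)) ^^ j) x" for j
  have YS: "Y (Suc j) = snd (F (Y j))" for j by (simp add: Y_def)
  have ofY: "overlap_free (Y j)" for j
  proof (induction j)
    case 0 then show ?case using of by (simp add: Y_def)
  next
    case (Suc j) then show ?case using FP[OF Suc] YS by (simp add: P_def)
  qed
  define c where "c j = fst (F (Y j))" for j
  have "good x c Y"
    unfolding good_def
  proof (intro conjI allI)
    show "Y 0 = x" by (simp add: Y_def)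
    fix j
    show "overlap_free (Y j)" by (rule ofY)
    have "P (Y j) (F (Y j))" by (rule FP[OF ofY])
    then show "c j \<in> {0..4}" "Y j = prepend (pref (c j)) (mu (Y (Suc j)))"
      unfolding P_def c_def YS by blast+
  qed
  then show ?thesis by blast
qed

lemma code_good:
  assumes of: "overlap_free x"
  shows "\<exists>Y. good x (code x) Y"
proof -
  obtain c Y where cY: "good x c Y" using code_ex[OF of] by blast
  have "\<exists>!c. is_code x c"
  proof (rule ex1I[of _ c])
    show "is_code x c" using cY is_code_good by blast
    fix c' assume "is_code x c'"
    then obtain Y' where "good x c' Y'" using is_code_good by blast
    then show "c' = c" using good_unique[OF cY] by blast
  qed
  then have "is_code x (code x)" unfolding code_def by (rule theI')
  then show ?thesis by (simp add: is_code_good)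
qed

lemma good_shift:
  assumes g: "good z d Y"
  shows "good (Y j) (\<lambda>n. d (j+n)) (\<lambda>n. Y (j+n))"
proof -
  have h: "overlap_free (Y m) \<and> d m \<in> {0..4} \<and> Y m = prepend (pref (d m)) (mu (Y (Suc m)))" for m
    using g unfolding good_def by blast
  have "overlap_free (Y (j + n)) \<and> d (j + n) \<in> {0..4} \<and> Y (j + n) = prepend (pref (d (j + n))) (mu (Y (j + Suc n)))" for n
  proof -
    have e: "j + Suc n = Suc (j + n)" by simp
    show ?thesis unfolding e by (rule h)
  qed
  moreover have "Y (j + 0) = Y j" by (simp only: add_0_right)
  ultimately show ?thesis unfolding good_def by blast
qed

fun sh :: "(nat \<Rightarrow> nat) \<Rightarrow> nat \<Rightarrow> nat" where
  "sh c 0 = 0"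
| "sh c (Suc j) = sh c j + 2^j * length (pref (c j))"

lemma Y_pos:
  assumes g: "good x c Y"
  shows "Y j n = x (2^j*n + sh c j)"
proof (induction j arbitrary: n)
  case 0
  have "Y 0 = x" using g unfolding good_def by blast
  then show ?case by simp
next
  case (Suc j)
  have h: "Y j = prepend (pref (c j)) (mu (Y (Suc j)))" using g unfolding good_def by blast
  have "Y (Suc j) n = prepend (pref (c j)) (mu (Y (Suc j))) (length (pref (c j)) + 2*n)"
    by (simp add: prepend_shift mu_even)
  also have "\<dots> = Y j (length (pref (c j)) + 2*n)" using h by simp
  also have "\<dots> = x (2^j*(length (pref (c j)) + 2*n) + sh c j)" by (rule Suc.IH)
  also have "\<dots> = x (2^Suc j * n + sh c (Suc j))" by (simp add: algebra_simps)
  finally show ?case .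
qed

lemma sh_bound: "sh c j + 2 \<le> 2^Suc j"
proof (induction j)
  case 0 then show ?case by simp
next
  case (Suc j)
  have A: "2^j * length (pref (c j)) \<le> 2^j*2" using pref_len[of "c j"] by (rule mult_le_mono2)
  have "sh c (Suc j) + 2 = (sh c j + 2) + 2^j * length (pref (c j))" by simp
  also have "\<dots> \<le> 2^Suc j + 2^j*2" using Suc A by linarith
  also have "\<dots> = 2^Suc (Suc j)" by simp
  finally show ?case .
qed

lemma auto_imp:
  assumes of: "overlap_free x" and au: "automatic2 x"
  shows "ultimately_periodic (code x)"
proof -
  obtain Y where g: "good x (code x) Y" using code_good[OF of] by blast
  define c where "c = code x"
  have g': "good x c Y" using g c_def by simp
  define G where "G = (\<lambda>(k, q). \<lambda>n. k (n + q)) ` (kernel2 x \<times> {0..<2::nat})"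
  have fG: "finite G" using au unfolding G_def automatic2_def by simp
  have YG: "Y j \<in> G" for j
  proof -
    define s where "s = sh c j"
    define r where "r = s mod 2^j"
    define q where "q = s div 2^j"
    define k where "k = (\<lambda>n. x (2^j*n + r))"
    have "r < 2^j" unfolding r_def by simp
    then have kk: "k \<in> kernel2 x" unfolding kernel2_def k_def by blast
    have "s < 2 * 2^j" using sh_bound[of c j] unfolding s_def by simp
    then have q2: "q < 2" unfolding q_def by (rule less_mult_imp_div_less)
    have sq: "2^j * q + r = s" unfolding q_def r_def by simp
    have "Y j = (\<lambda>n. k (n + q))"
    proof
      fix n
      have "Y j n = x (2^j*n + s)" using Y_pos[OF g'] s_def by simp
      also have "\<dots> = x (2^j*(n+q) + r)"
      proof -
        have "2^j*(n+q) + r = 2^j*n + s" unfolding sq[symmetric] by (simp add: algebra_simps)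
        then show ?thesis by simp
      qed
      finally show "Y j n = k (n + q)" by (simp add: k_def)
    qed
    then show ?thesis unfolding G_def using kk q2 by force
  qed
  have "finite (range Y)" using fG YG by (meson finite_subset image_subsetI)
  then have "\<not> inj Y" using finite_imageD by blast
  then obtain a b where ab: "a \<noteq> b" "Y a = Y b" unfolding inj_def by blast
  obtain a' b' where ab': "a' < b'" "Y a' = Y b'"
  proof (cases "a < b")
    case True then show ?thesis using that ab by blast
  next
    case False then show ?thesis using that[of b a] ab by simp
  qed
  have g1: "good (Y a') (\<lambda>n. c (a'+n)) (\<lambda>n. Y (a'+n))" by (rule good_shift[OF g'])
  have g2: "good (Y b') (\<lambda>n. c (b'+n)) (\<lambda>n. Y (b'+n))" by (rule good_shift[OF g'])
  have "(\<lambda>n. c (a'+n)) = (\<lambda>n. c (b'+n))" using good_unique[OF g1] g2 ab'(2) by metis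
  then have cc: "c (a' + m) = c (b' + m)" for m by metis
  have "\<forall>n\<ge>a'. c (n + (b' - a')) = c n"
  proof (intro allI impI)
    fix n assume "a' \<le> n"
    then have "n + (b' - a') = b' + (n - a')" "n = a' + (n - a')" using ab' by arith+
    then show "c (n + (b' - a')) = c n" using cc[of "n - a'"] by metis
  qed
  then show ?thesis unfolding ultimately_periodic_def c_def using ab' by (intro exI[of _ a'] exI[of _ "b'-a'"]) auto
qed

definition flip :: "bool \<Rightarrow> iword \<Rightarrow> iword" where "flip f w = (\<lambda>n. w n \<noteq> f)"
definition dec :: "nat \<Rightarrow> iword \<Rightarrow> iword" where "dec b w = (\<lambda>n. w (2*n+b))"
definition qdec :: "nat \<Rightarrow> bool list \<Rightarrow> bool list" where
  "qdec b q = map (\<lambda>n. q ! (2*n+b)) [0..<(length q + 1 - b) div 2]"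

lemma flip_False: "flip False w = w" by (simp add: flip_def)

lemma flip_prepend: "flip f (prepend p g) = prepend (map (\<lambda>a. a \<noteq> f) p) (flip f g)"
  by (rule ext) (simp add: flip_def prepend_def)

lemma flip_mu: "flip f (mu v) = mu (flip f v)"
  by (rule ext) (auto simp: flip_def mu_def)

lemma flip_flip: "flip g (flip f v) = flip (g \<noteq> f) v"
  by (rule ext) (auto simp: flip_def)

lemma prepend_prepend: "prepend u (prepend q g) = prepend (u @ q) g"
  by (rule ext) (auto simp: prepend_def nth_append)

lemma len_qdec: "length (qdec b q) = (length q + 1 - b) div 2"
  by (simp add: qdec_def)

lemma dec_prepend_mu:
  assumes b: "b < 2"
  shows "dec b (prepend q (mu v)) = prepend (qdec b q) (flip (odd (length q + b)) v)"
proof (rule ext)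
  fix n
  define m where "m = length q"
  define L where "L = (m + 1 - b) div 2"
  have lq: "length (qdec b q) = L" unfolding L_def m_def by (simp add: len_qdec)
  show "dec b (prepend q (mu v)) n = prepend (qdec b q) (flip (odd (length q + b)) v) n"
  proof (cases "2*n+b < m")
    case True
    then have nL: "n < L" unfolding L_def using b by presburger
    have "dec b (prepend q (mu v)) n = q ! (2*n+b)"
      using True by (simp add: dec_def prepend_def m_def)
    moreover have "prepend (qdec b q) (flip (odd (length q + b)) v) n = q ! (2*n+b)"
      using nL lq by (simp add: prepend_def qdec_def L_def m_def)
    ultimately show ?thesis by simp
  next
    case False
    then have nL: "\<not> n < L" unfolding L_def using b by presburger
    have e1: "(2*n+b-m) div 2 = n - L" unfolding L_def using b False by presburger
    have e2: "even (2*n+b-m) = even (m+b)" using b False by presburger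
    have "dec b (prepend q (mu v)) n = mu v (2*n+b-m)"
      using False by (simp add: dec_def prepend_def m_def)
    moreover have "prepend (qdec b q) (flip (odd (length q + b)) v) n = (v (n - L) \<noteq> odd (m + b))"
      using nL lq by (simp add: prepend_def flip_def m_def)
    ultimately show ?thesis unfolding mu_def using e1 e2 by auto
  qed
qed

lemma kernel_sub:
  assumes aS: "a \<in> S" and cl: "\<And>f b. f \<in> S \<Longrightarrow> b < 2 \<Longrightarrow> dec b f \<in> S"
  shows "kernel2 a \<subseteq> S"
proof -
  have "\<forall>i. i < 2^e \<longrightarrow> (\<lambda>n. a (2^e*n+i)) \<in> S" for e
  proof (induction e)
    case 0 then show ?case using aS by simp
  next
    case (Suc e)
    show ?case
    proof (intro allI impI)
      fix i :: nat assume i: "i < 2^Suc e"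
      define b where "b = i div 2^e"
      define i' where "i' = i mod 2^e"
      have b2: "b < 2" unfolding b_def using i by (intro less_mult_imp_div_less) simp
      have i'l: "i' < 2^e" unfolding i'_def by simp
      have ii: "2^e * b + i' = i" unfolding b_def i'_def by simp
      have "(\<lambda>n. a (2^Suc e*n+i)) = dec b (\<lambda>n. a (2^e*n+i'))"
      proof
        fix n
        have "2^Suc e*n+i = 2^e*(2*n+b)+i'" unfolding ii[symmetric] by (simp add: algebra_simps)
        then show "a (2^Suc e*n+i) = dec b (\<lambda>n. a (2^e*n+i')) n" by (simp add: dec_def)
      qed
      moreover have "(\<lambda>n. a (2^e*n+i')) \<in> S" using Suc i'l by blast
      ultimately show "(\<lambda>n. a (2^Suc e*n+i)) \<in> S" using cl b2 by simp
    qed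
  qed
  then show ?thesis unfolding kernel2_def by blast
qed

lemma per_mult: "(\<And>n. n \<ge> N \<Longrightarrow> (d::nat \<Rightarrow> 'a) (n + P) = d n) \<Longrightarrow> n \<ge> N \<Longrightarrow> d (n + k*P) = d n"
proof (induction k)
  case 0 then show ?case by simp
next
  case (Suc k)
  have "d (n + Suc k * P) = d ((n + k*P) + P)" by (simp add: algebra_simps)
  also have "\<dots> = d (n + k*P)" using Suc.prems by simp
  finally show ?case using Suc by simp
qed

lemma prepend_mu_0: "prepend p (mu w) 0 = (if p = [] then w 0 else hd p)"
  by (cases p) (simp_all add: prepend_def mu_def)

lemma determ:
  assumes g: "good z d Y" and g': "good z' d Y'" and P: "P > 0" and per: "\<And>n. d (n + P) = d n"
    and z0: "z 0 = z' 0"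
  shows "z = z'"
proof -
  have hY: "Y j = prepend (pref (d j)) (mu (Y (Suc j)))" for j using g unfolding good_def by blast
  have hY': "Y' j = prepend (pref (d j)) (mu (Y' (Suc j)))" for j using g' unfolding good_def by blast
  have Y0: "Y 0 = z" and Y0': "Y' 0 = z'" using g g' unfolding good_def by blast+
  have f1: "Y j 0 = (if pref (d j) = [] then Y (Suc j) 0 else hd (pref (d j)))" for j
    using fun_cong[OF hY[of j], of 0] prepend_mu_0 by metis
  have f1': "Y' j 0 = (if pref (d j) = [] then Y' (Suc j) 0 else hd (pref (d j)))" for j
    using fun_cong[OF hY'[of j], of 0] prepend_mu_0 by metis
  have st1: "\<forall>j. pref (d (j+t)) \<noteq> [] \<longrightarrow> Y j 0 = Y' j 0" for t
  proof (induction t)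
    case 0 show ?case
    proof (intro allI impI)
      fix j assume "pref (d (j + 0)) \<noteq> []"
      then show "Y j 0 = Y' j 0" using f1[of j] f1'[of j] by simp
    qed
  next
    case (Suc t)
    show ?case
    proof (intro allI impI)
      fix j assume ne: "pref (d (j + Suc t)) \<noteq> []"
      show "Y j 0 = Y' j 0"
      proof (cases "pref (d j) = []")
        case False then show ?thesis using f1[of j] f1'[of j] by simp
      next
        case True
        have "Y (Suc j) 0 = Y' (Suc j) 0" using Suc ne by simp
        then show ?thesis using f1[of j] f1'[of j] True by simp
      qed
    qed
  qed
  have pm: "d (n + k*P) = d n" for n k using per_mult[of 0 d P n k] per by simp
  have s1: "Y j 0 = Y' j 0" for j
  proof (cases "\<exists>k\<ge>j. pref (d k) \<noteq> []")
    case True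
    then obtain k where "k \<ge> j" "pref (d k) \<noteq> []" by blast
    then show ?thesis using st1[of "k - j"] by simp
  next
    case False
    have allE: "pref (d k) = []" for k
    proof -
      have "j \<le> j*P" using P by simp
      then have "k + j*P \<ge> j" by linarith
      then have "pref (d (k + j*P)) = []" using False by blast
      then show ?thesis using pm by simp
    qed
    have "Y i 0 = z 0 \<and> Y' i 0 = z' 0" for i
    proof (induction i)
      case 0 then show ?case using Y0 Y0' by simp
    next
      case (Suc i) then show ?case using f1[of i] f1'[of i] allE by simp
    qed
    then show ?thesis using z0 by simp
  qed
  have s2: "\<forall>j. Y j n = Y' j n" for n
  proof (induction n rule: less_induct)
    case (less n)
    show ?case
    proof
      fix j
      show "Y j n = Y' j n"
      proof (cases "n = 0")
        case True then show ?thesis using s1 by simp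
      next
        case n0: False
        show ?thesis
        proof (cases "n < length (pref (d j))")
          case True
          then show ?thesis using fun_cong[OF hY[of j], of n] fun_cong[OF hY'[of j], of n]
            by (simp add: prepend_def)
        next
          case False
          define k where "k = n - length (pref (d j))"
          have kn: "k div 2 < n" unfolding k_def using n0 by simp
          have a: "Y j n = mu (Y (Suc j)) k" using fun_cong[OF hY[of j], of n] False
            by (simp add: prepend_def k_def)
          have b: "Y' j n = mu (Y' (Suc j)) k" using fun_cong[OF hY'[of j], of n] False
            by (simp add: prepend_def k_def)
          have "Y (Suc j) (k div 2) = Y' (Suc j) (k div 2)" using less kn by blast
          then show ?thesis using a b by (simp add: mu_def)
        qed
      qed
    qed
  qed
  show ?thesis using s2 Y0 Y0' by auto
qed

lemma prepend_Nil: "prepend [] y = y" by (rule ext) (simp add: prepend_def)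

lemma finite_code_class:
  assumes P: "P > 0" and per: "\<And>n. d (n + P) = d n"
  shows "finite {z. \<exists>Y. good z d Y}"
proof -
  let ?T = "{z. \<exists>Y. good z d Y}"
  have "inj_on (\<lambda>z. z 0) ?T"
  proof (rule inj_onI)
    fix z z' assume "z \<in> ?T" "z' \<in> ?T" "z 0 = z' 0"
    then obtain Y Y' where gg: "good z d Y" "good z' d Y'" by blast
    show "z = z'" by (rule determ[OF gg(1) gg(2) P per \<open>z 0 = z' 0\<close>])
  qed
  moreover have "finite ((\<lambda>z. z 0) ` ?T)" by simp
  ultimately show ?thesis using finite_imageD by blast
qed

lemma imp_auto:
  assumes of: "overlap_free x" and up: "ultimately_periodic (code x)"
  shows "automatic2 x"
proof -
  obtain Y where g0: "good x (code x) Y" using code_good[OF of] by blast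
  define c where "c = code x"
  have g: "good x c Y" using g0 c_def by simp
  have hY: "Y j = prepend (pref (c j)) (mu (Y (Suc j)))" for j using g unfolding good_def by blast
  have Y0: "Y 0 = x" using g unfolding good_def by blast
  obtain N P where P: "P > 0" and per: "\<And>n. n \<ge> N \<Longrightarrow> c (n + P) = c n"
    using up unfolding ultimately_periodic_def c_def by blast
  define dr where "dr r = (\<lambda>n. c (N + r + n))" for r
  define T where "T r = {z. \<exists>Y. good z (dr r) Y}" for r
  have fT: "finite (T r)" for r
    unfolding T_def
  proof (rule finite_code_class[OF P])
    fix n show "dr r (n + P) = dr r n" unfolding dr_def using per[of "N + r + n"] by (simp add: add.assoc)
  qed
  have YT: "Y j \<in> T ((j - N) mod P)" if jN: "j \<ge> N" for j
  proof -
    define r where "r = (j - N) mod P"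
    define t where "t = (j - N) div P"
    have jj: "j + n = (N + r + n) + t * P" for n
      unfolding r_def t_def using jN by (simp add: algebra_simps)
    have "(\<lambda>n. c (j+n)) = dr r"
    proof
      fix n
      show "c (j+n) = dr r n" unfolding dr_def jj using per_mult[of N c P "N + r + n" t] per by simp
    qed
    then show ?thesis using good_shift[OF g, of j] unfolding T_def r_def by auto
  qed
  have "range Y \<subseteq> Y ` {..<N} \<union> (\<Union>r<P. T r)"
  proof
    fix z assume "z \<in> range Y"
    then obtain j where "z = Y j" by blast
    then show "z \<in> Y ` {..<N} \<union> (\<Union>r<P. T r)"
      using YT[of j] P by (cases "j < N") (auto intro: mod_less_divisor)
  qed
  moreover have "finite (Y ` {..<N} \<union> (\<Union>r<P. T r))" using fT by simp
  ultimately have fY: "finite (range Y)" by (rule finite_subset)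
  define U where "U = {u :: bool list. length u \<le> 3}"
  have fU: "finite U"
  proof -
    have "U = {xs. set xs \<subseteq> (UNIV :: bool set) \<and> length xs \<le> 3}" unfolding U_def by auto
    then show ?thesis using finite_lists_length_le[of "UNIV :: bool set" 3] by simp
  qed
  define S where "S = (\<lambda>(u, f, w). prepend u (flip f w)) ` (U \<times> (UNIV :: bool set) \<times> range Y)"
  have fS: "finite S" unfolding S_def using fU fY by simp
  have xS: "x \<in> S"
  proof -
    have "x = prepend [] (flip False (Y 0))" using Y0 by (simp add: flip_False prepend_Nil)
    moreover have "([], False, Y 0) \<in> U \<times> (UNIV :: bool set) \<times> range Y" unfolding U_def by simp
    ultimately show ?thesis unfolding S_def by force
  qed
  have cl: "dec b s \<in> S" if sS: "s \<in> S" and b: "b < 2" for s b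
  proof -
    obtain u f j where u: "length u \<le> 3" and s: "s = prepend u (flip f (Y j))"
      using sS unfolding S_def U_def by auto
    define p where "p = map (\<lambda>a. a \<noteq> f) (pref (c j))"
    define q where "q = u @ p"
    have lq: "length q \<le> 5" unfolding q_def p_def using u pref_len[of "c j"] by simp
    have "s = prepend q (mu (flip f (Y (Suc j))))"
      unfolding s q_def p_def hY[of j] flip_prepend flip_mu prepend_prepend by simp
    then have "dec b s = prepend (qdec b q) (flip (odd (length q + b) \<noteq> f) (Y (Suc j)))"
      using dec_prepend_mu[OF b] flip_flip by simp
    moreover have "length (qdec b q) \<le> 3" using lq by (simp add: len_qdec)
    ultimately show ?thesis unfolding S_def U_def by force
  qed
  have "kernel2 x \<subseteq> S" using kernel_sub[OF xS] cl by blast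
  then show ?thesis unfolding automatic2_def using fS by (rule finite_subset)
qed

theorem theorem7:
  fixes x :: iword
  assumes "overlap_free x"
  shows "automatic2 x \<longleftrightarrow> ultimately_periodic (code x)"
  using auto_imp[OF assms] imp_auto[OF assms] by blast

end
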